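(* Let $s\ge2$ groups of positive integer moduli be given: Group $j$ ($1\le j\le s$) consists of $L_j\ge1$ moduli $0<M_{j,1}<\dots<M_{j,L_j}$; put $\delta_j=\operatorname{lcm}(M_{j,1},\dots,M_{j,L_j})$ and assume $\delta_1,\dots,\delta_s$ pairwise distinct. Let $N$ be an integer with $0\le N<\operatorname{lcm}(\delta_1,\dots,\delta_s)$, let $r_{j,i}$ be the remainder of $N$ modulo $M_{j,i}$ and $n_{j,i}=(N-r_{j,i})/M_{j,i}$. Let $\tilde r_{j,i}$ be integers with $0\le\tilde r_{j,i}\le M_{j,i}-1$ and $|\tilde r_{j,i}-r_{j,i}|\le\tau_j$ for all $i,j$, where $$\tau_j<\min(G_j,G)\quad(1\le j\le s),$$ with $G_j=\max_{1\le i\le L_j}\min_{q\ne i}\gcd(M_{j,i},M_{j,q})/4$ if $L_j\ge2$, $G_j=M_{j,1}/4$ if $L_j=1$, and $G=\max_{1\le i\le s}\min_{q\ne i}\gcd(\delta_i,\delta_q)/4$. Then the two-stage algorithm (described in the context) outputs $\hat n_{j,i}=n_{j,i}$ for all $i,j$, and its estimate $$\hat N=\left[\frac1{\sum_{j=1}^sL_j}\sum_{j=1}^s\sum_{i=1}^{L_j}(\hat n_{j,i}M_{j,i}+\tilde r_{j,i})\right]$$ satisfies $|\hat N-N|\le\left[\frac{\sum_{j=1}^sL_j\tau_j}{\sum_{j=1}^sL_j}\right]$.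
   Context: For $x\in\mathbb R$, $[x]$ denotes the unique integer with $-1/2\le x-[x]<1/2$. Single-stage algorithm $\mathcal A$: for pairwise distinct positive integers $P_1,\dots,P_m$ ($m\ge2$), a reference index $k$ and integers $x_1,\dots,x_m$: for $i\ne k$ put $m_{ki}=\gcd(P_k,P_i)$, $\Gamma_{ki}=P_k/m_{ki}$, $\Gamma_{ik}=P_i/m_{ki}$, $\hat q_{ik}=[(x_i-x_k)/m_{ki}]$, let $\bar\Gamma_{ki}$ be an inverse of $\Gamma_{ki}$ modulo $\Gamma_{ik}$ and $\hat\xi_{ik}\equiv\hat q_{ik}\bar\Gamma_{ki}\pmod{\Gamma_{ik}}$, $0\le\hat\xi_{ik}<\Gamma_{ik}$; let $\hat n_k$ be the least nonnegative $y$ with $y\equiv\hat\xi_{ik}\pmod{\Gamma_{ik}}$ for all $i\ne k$ (the algorithm fails if none exists), and $\hat n_i=(\hat n_k\Gamma_{ki}-\hat q_{ik})/\Gamma_{ik}$ for $i\ne k$. Two-stage algorithm: Stage 1: for each group $j$, if $L_j\ge2$ apply $\mathcal A$ to $M_{j,1},\dots,M_{j,L_j}$ with inputs $\tilde r_{j,1},\dots,\tilde r_{j,L_j}$ and a reference index attaining $\max_i\min_{q\ne i}\gcd(M_{j,i},M_{j,q})$, obtaining $\hat K_{j,1},\dots,\hat K_{j,L_j}$; if $L_j=1$ set $\hat K_{j,1}=0$. Put $\hat N_j=[\frac1{L_j}\sum_{i=1}^{L_j}(\hat K_{j,i}M_{j,i}+\tilde r_{j,i})]$. Stage 2: apply $\mathcal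 A$ to the moduli $\delta_1,\dots,\delta_s$ with inputs $\hat N_1,\dots,\hat N_s$ and a reference index attaining $\max_i\min_{q\ne i}\gcd(\delta_i,\delta_q)$, obtaining $\hat l_1,\dots,\hat l_s$. Output $\hat n_{j,i}=\hat l_j\delta_j/M_{j,i}+\hat K_{j,i}$. *)

theory Defs
  imports Complex_Main "HOL-Number_Theory.Cong"
begin

text \<open>Rounding [x]: the unique integer k with -1/2 \<le> x - k < 1/2, i.e. floor (x + 1/2).\<close>
definition rnd :: "real \<Rightarrow> int" where
  "rnd x = \<lfloor>x + 1/2\<rfloor>"

definition maxmin_gcd :: "nat \<Rightarrow> (nat \<Rightarrow> int) \<Rightarrow> int" where
  "maxmin_gcd m P = Max ((\<lambda>i. Min ((\<lambda>q. gcd (P i) (P q)) ` ({..<m} - {i}))) ` {..<m})"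

definition is_ref_index :: "nat \<Rightarrow> (nat \<Rightarrow> int) \<Rightarrow> nat \<Rightarrow> bool" where
  "is_ref_index m P k \<longleftrightarrow> k < m \<and>
     Min ((\<lambda>q. gcd (P k) (P q)) ` ({..<m} - {k})) = maxmin_gcd m P"

definition alg_A :: "nat \<Rightarrow> (nat \<Rightarrow> int) \<Rightarrow> nat \<Rightarrow> (nat \<Rightarrow> int) \<Rightarrow> (nat \<Rightarrow> int) option" where
  "alg_A m P k x =
    (let mm = (\<lambda>i. gcd (P k) (P i));
         Gki = (\<lambda>i. P k div mm i);
         Gik = (\<lambda>i. P i div mm i);
         q = (\<lambda>i. rnd (real_of_int (x i - x k) / real_of_int (mm i)));
         inv = (\<lambda>i. SOME v. [Gki i * v = 1] (mod Gik i));
         xi = (\<lambda>i. (q i * inv i) mod Gik i);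
         ok = (\<lambda>y::nat. \<forall>i<m. i \<noteq> k \<longrightarrow> [int y = xi i] (mod Gik i))
     in if (\<exists>y. ok y) then
          (let nk = int (LEAST y. ok y)
           in Some (\<lambda>i. if i = k then nk else (nk * Gki i - q i) div Gik i))
        else None)"

definition delta :: "(nat \<Rightarrow> nat) \<Rightarrow> (nat \<Rightarrow> nat \<Rightarrow> int) \<Rightarrow> nat \<Rightarrow> int" where
  "delta L M j = Lcm (M j ` {..<L j})"

definition stage1 :: "(nat \<Rightarrow> nat) \<Rightarrow> (nat \<Rightarrow> nat \<Rightarrow> int) \<Rightarrow> (nat \<Rightarrow> nat \<Rightarrow> int)
    \<Rightarrow> (nat \<Rightarrow> nat) \<Rightarrow> nat \<Rightarrow> (nat \<Rightarrow> int) option" where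
  "stage1 L M rt kg j = (if L j \<ge> 2 then alg_A (L j) (M j) (kg j) (rt j) else Some (\<lambda>_. 0))"

definition Nhat_group :: "(nat \<Rightarrow> nat) \<Rightarrow> (nat \<Rightarrow> nat \<Rightarrow> int) \<Rightarrow> (nat \<Rightarrow> nat \<Rightarrow> int)
    \<Rightarrow> nat \<Rightarrow> (nat \<Rightarrow> int) \<Rightarrow> int" where
  "Nhat_group L M rt j K =
     rnd ((\<Sum>i<L j. real_of_int (K i * M j i + rt j i)) / real (L j))"

definition two_stage :: "nat \<Rightarrow> (nat \<Rightarrow> nat) \<Rightarrow> (nat \<Rightarrow> nat \<Rightarrow> int) \<Rightarrow> (nat \<Rightarrow> nat \<Rightarrow> int)
    \<Rightarrow> (nat \<Rightarrow> nat) \<Rightarrow> nat \<Rightarrow> (nat \<Rightarrow> nat \<Rightarrow> int) option" where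
  "two_stage s L M rt kg k0 =
    (if \<forall>j<s. stage1 L M rt kg j \<noteq> None then
       (let K = (\<lambda>j. the (stage1 L M rt kg j))
        in case alg_A s (delta L M) k0 (\<lambda>j. Nhat_group L M rt j (K j)) of
             None \<Rightarrow> None
           | Some l \<Rightarrow> Some (\<lambda>j i. l j * delta L M j div M j i + K j i))
     else None)"

end

theory Submission
  imports Defs
begin


lemma rnd_int_add: "rnd (of_int z + a) = z + rnd a"
  unfolding rnd_def
  by (metis add.assoc add.commute floor_add_int)

lemma rnd_mono: "a \<le> b \<Longrightarrow> rnd a \<le> rnd b"
  unfolding rnd_def by (simp add: floor_mono)

lemma rnd_of_int[simp]: "rnd (of_int z) = z"
  unfolding rnd_def by linarith

lemma rnd_small: "-1/2 \<le> d \<Longrightarrow> d < 1/2 \<Longrightarrow> rnd (of_int z + d) = z"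
  unfolding rnd_def by linarith

lemma Lcm_pos:
  fixes A :: "int set"
  assumes "finite A" "\<forall>a\<in>A. 0 < a"
  shows "0 < Lcm A"
proof -
  have "Lcm A \<noteq> 0" using assms Lcm_0_iff by force
  moreover have "0 \<le> Lcm A" by simp
  ultimately show ?thesis by linarith
qed

lemma alg_A_correct:
  fixes m k :: nat and P x :: "nat \<Rightarrow> int" and X g :: int
  assumes k: "k < m" and Ppos: "\<forall>i<m. 0 < P i"
    and gle: "\<forall>i<m. i \<noteq> k \<longrightarrow> g \<le> gcd (P k) (P i)"
    and X0: "0 \<le> X" and XL: "X < Lcm (P ` {..<m})"
    and err: "\<forall>i<m. 4 * \<bar>x i - X mod P i\<bar> < g"
  shows "\<exists>n. alg_A m P k x = Some n \<and> (\<forall>i<m. n i = X div P i)"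
proof -
  define mm where "mm = (\<lambda>i. gcd (P k) (P i))"
  define Gki where "Gki = (\<lambda>i. P k div mm i)"
  define Gik where "Gik = (\<lambda>i. P i div mm i)"
  define q where "q = (\<lambda>i. rnd (real_of_int (x i - x k) / real_of_int (mm i)))"
  define inv where "inv = (\<lambda>i. SOME v. [Gki i * v = 1] (mod Gik i))"
  define xi where "xi = (\<lambda>i. (q i * inv i) mod Gik i)"
  define ok where "ok = (\<lambda>y::nat. \<forall>i<m. i \<noteq> k \<longrightarrow> [int y = xi i] (mod Gik i))"
  have A: "alg_A m P k x = (if (\<exists>y. ok y) then
          (let nk = int (LEAST y. ok y)
           in Some (\<lambda>i. if i = k then nk else (nk * Gki i - q i) div Gik i))
        else None)"
    unfolding alg_A_def mm_def Gki_def Gik_def q_def inv_def xi_def ok_def Let_def by simp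
  define nk where "nk = X div P k"
  have Pk: "0 < P k" using Ppos k by auto
  have mmpos: "0 < mm i" for i using Pk by (simp add: mm_def)
  have Pk_eq: "P k = Gki i * mm i" for i by (simp add: Gki_def mm_def)
  have Pi_eq: "P i = Gik i * mm i" for i by (simp add: Gik_def mm_def)
  have Gik_pos: "0 < Gik i" if "i < m" for i
    using Pi_eq[of i] mmpos[of i] Ppos that by (metis zero_less_mult_iff order_less_asym)
  have inv: "[Gki i * inv i = 1] (mod Gik i)" for i
  proof -
    have "coprime (Gki i) (Gik i)" unfolding Gki_def Gik_def mm_def
      using div_gcd_coprime Pk by (metis less_irrefl)
    then obtain v where "[Gki i * v = 1] (mod Gik i)" using cong_solve_coprime_int by blast
    then show ?thesis unfolding inv_def by (rule someI)
  qed
  have key: "nk * Gki i - X div P i * Gik i = q i" if "i < m" "i \<noteq> k" for i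
  proof -
    define d where "d = X mod P i - X mod P k"
    have d1: "d = nk * P k - X div P i * P i" unfolding d_def nk_def
      by (simp add: minus_div_mult_eq_mod[symmetric])
    have "mm i dvd d" unfolding d1 mm_def by simp
    then obtain z where z: "d = mm i * z" by blast
    define e where "e = (x i - X mod P i) - (x k - X mod P k)"
    have ei: "4 * \<bar>x i - X mod P i\<bar> < mm i" using err[rule_format, OF that(1)] gle[rule_format, OF that] unfolding mm_def by linarith
    have ek: "4 * \<bar>x k - X mod P k\<bar> < mm i" using err[rule_format, OF k] gle[rule_format, OF that] unfolding mm_def by linarith
    have e2: "2 * \<bar>e\<bar> < mm i" using ei ek unfolding e_def by (smt (verit))
    have xd: "x i - x k = mm i * z + e" unfolding e_def using z d_def by linarith
    have "real_of_int (x i - x k) / real_of_int (mm i) = of_int z + real_of_int e / real_of_int (mm i)"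
      using mmpos[of i] by (simp add: xd field_simps)
    moreover have "-1/2 \<le> real_of_int e / real_of_int (mm i)" "real_of_int e / real_of_int (mm i) < 1/2"
      using e2 mmpos[of i] by (simp_all add: field_simps abs_less_iff)
    ultimately have qz: "q i = z" unfolding q_def using rnd_small by simp
    have "(nk * Gki i - X div P i * Gik i) * mm i = d"
      using d1 Pk_eq[of i] Pi_eq[of i] by (simp add: algebra_simps)
    then have "(nk * Gki i - X div P i * Gik i) * mm i = z * mm i" using z by simp
    then show ?thesis using qz mmpos[of i] by simp
  qed
  have nkcong: "[nk = xi i] (mod Gik i)" if "i < m" "i \<noteq> k" for i
  proof -
    have "[nk * Gki i = q i] (mod Gik i)"
    proof -
      have "nk * Gki i - q i = Gik i * (X div P i)" using key[OF that] by (simp add: algebra_simps)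
      then show ?thesis by (simp add: cong_iff_dvd_diff)
    qed
    then have "[nk * Gki i * inv i = q i * inv i] (mod Gik i)" by (rule cong_mult) simp
    moreover have "[nk * (Gki i * inv i) = nk * 1] (mod Gik i)" using inv by (rule cong_mult[OF cong_refl])
    ultimately have "[nk = q i * inv i] (mod Gik i)"
      by (metis cong_sym cong_trans mult.assoc mult_1_right)
    then show ?thesis unfolding xi_def by (simp add: cong_def)
  qed
  have nk0: "0 \<le> nk" unfolding nk_def using X0 Pk by (simp add: pos_imp_zdiv_nonneg_iff)
  have oknk: "ok (nat nk)" unfolding ok_def using nkcong nk0 by simp
  define y0 where "y0 = (LEAST y. ok y)"
  have oky0: "ok y0" unfolding y0_def using oknk by (rule LeastI)
  have y0le: "y0 \<le> nat nk" unfolding y0_def using oknk by (rule Least_le)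
  define D where "D = Lcm (Gik ` ({..<m} - {k}))"
  have Dpos: "0 < D" unfolding D_def by (rule Lcm_pos) (use Gik_pos in auto)
  have Ddvd: "D dvd (int y0 - nk)" unfolding D_def
  proof (rule Lcm_least)
    fix b assume "b \<in> Gik ` ({..<m} - {k})"
    then obtain i where i: "i < m" "i \<noteq> k" "b = Gik i" by auto
    have "[int y0 = nk] (mod Gik i)" using oky0 i nkcong unfolding ok_def
      by (meson cong_sym cong_trans)
    then show "b dvd (int y0 - nk)" using i by (simp add: cong_iff_dvd_diff)
  qed
  have "Lcm (P ` {..<m}) dvd P k * D"
  proof (rule Lcm_least)
    fix b assume "b \<in> P ` {..<m}"
    then obtain i where i: "i < m" "b = P i" by auto
    show "b dvd P k * D"
    proof (cases "i = k")
      case True then show ?thesis using i by simp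
    next
      case False
      have "Gik i dvd D" unfolding D_def using i False by (intro dvd_Lcm) auto
      moreover have "P k * Gik i = Gki i * P i" using Pk_eq[of i] Pi_eq[of i] by (simp add: algebra_simps)
      ultimately show ?thesis using i
        by (metis dvd_triv_right mult_dvd_mono dvd_trans dvd_refl)
    qed
  qed
  then have "Lcm (P ` {..<m}) \<le> P k * D" using Pk Dpos by (intro zdvd_imp_le) auto
  then have "X < P k * D" using XL by linarith
  moreover have "X div P k * P k + X mod P k = X" by simp
  moreover have "0 \<le> X mod P k" using Pk by simp
  ultimately have "X div P k * P k < D * P k" by (simp only: mult.commute[of "P k" D])
  then have "X div P k < D" using mult_right_less_imp_less[of "X div P k" "P k" D] Pk by linarith
  then have nkD: "nk < D" by (simp add: nk_def)
  have "int y0 = nk"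
  proof (rule ccontr)
    assume "int y0 \<noteq> nk"
    then have "0 < nk - int y0" using y0le nk0 by linarith
    moreover have "D dvd nk - int y0" using Ddvd by (metis dvd_minus_iff minus_diff_eq)
    ultimately have "D \<le> nk - int y0" by (intro zdvd_imp_le)
    then show False using nkD by linarith
  qed
  then have "alg_A m P k x = Some (\<lambda>i. if i = k then nk else (nk * Gki i - q i) div Gik i)"
    unfolding A using oknk y0_def by (auto simp: Let_def)
  moreover have "\<forall>i<m. (if i = k then nk else (nk * Gki i - q i) div Gik i) = X div P i"
  proof (intro allI impI)
    fix i assume i: "i < m"
    show "(if i = k then nk else (nk * Gki i - q i) div Gik i) = X div P i"
    proof (cases "i = k")
      case True then show ?thesis by (simp add: nk_def)
    next
      case False
      have "nk * Gki i - q i = X div P i * Gik i" using key[OF i False] by simp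
      then show ?thesis using False Gik_pos[OF i] by simp
    qed
  qed
  ultimately show ?thesis by blast
qed



lemma rnd_neg_bound: "- rnd T \<le> rnd (- T)"
  unfolding rnd_def by linarith

lemma final_est:
  fixes X E S :: real and SL :: nat and N :: int
  assumes SLpos: "0 < real SL" and X: "X = real SL * of_int N + E" and Eb: "\<bar>E\<bar> \<le> S"
  shows "\<bar>rnd (X / real SL) - N\<bar> \<le> rnd (S / real SL)"
proof -
  define a where "a = E / real SL"
  define T where "T = S / real SL"
  have ab: "\<bar>a\<bar> \<le> T"
  proof -
    have "\<bar>a\<bar> = \<bar>E\<bar> / real SL" unfolding a_def using SLpos by simp
    also have "\<dots> \<le> S / real SL"
      by (rule divide_right_mono[OF Eb]) (use SLpos in linarith)
    finally show ?thesis unfolding T_def .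
  qed
  have "X / real SL = of_int N + a" unfolding X a_def using SLpos by (simp add: field_simps)
  then have R1: "rnd (X / real SL) - N = rnd a" by (simp add: rnd_int_add)
  have "rnd a \<le> rnd T" using ab by (intro rnd_mono) (simp add: abs_le_iff)
  moreover have "rnd (- T) \<le> rnd a" using ab by (intro rnd_mono) (simp add: abs_le_iff)
  moreover have "- rnd T \<le> rnd (- T)" unfolding rnd_def by linarith
  ultimately show ?thesis unfolding R1 T_def by linarith
qed

theorem theorem3:
  fixes s :: nat and L :: "nat \<Rightarrow> nat" and M rt :: "nat \<Rightarrow> nat \<Rightarrow> int"
    and N :: int and tau :: "nat \<Rightarrow> real" and kg :: "nat \<Rightarrow> nat" and k0 :: nat
  assumes s2: "s \<ge> 2"
    and L1: "\<forall>j<s. L j \<ge> 1"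
    and Mpos: "\<forall>j<s. \<forall>i<L j. 0 < M j i"
    and Minc: "\<forall>j<s. \<forall>i i'. i < i' \<and> i' < L j \<longrightarrow> M j i < M j i'"
    and delta_dist: "\<forall>j<s. \<forall>j'<s. j \<noteq> j' \<longrightarrow> delta L M j \<noteq> delta L M j'"
    and N_range: "0 \<le> N" "N < Lcm (delta L M ` {..<s})"
    and rt_range: "\<forall>j<s. \<forall>i<L j. 0 \<le> rt j i \<and> rt j i \<le> M j i - 1"
    and rt_err: "\<forall>j<s. \<forall>i<L j. \<bar>real_of_int (rt j i - N mod M j i)\<bar> \<le> tau j"
    and tau_bound: "\<forall>j<s. tau j < min
        (if L j \<ge> 2 then real_of_int (maxmin_gcd (L j) (M j)) / 4 else real_of_int (M j 0) / 4)
        (real_of_int (maxmin_gcd s (delta L M)) / 4)"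
    and kg_ref: "\<forall>j<s. L j \<ge> 2 \<longrightarrow> is_ref_index (L j) (M j) (kg j)"
    and k0_ref: "is_ref_index s (delta L M) k0"
  shows "\<exists>nhat. two_stage s L M rt kg k0 = Some nhat
     \<and> (\<forall>j<s. \<forall>i<L j. nhat j i = (N - N mod M j i) div M j i)
     \<and> \<bar>rnd ((\<Sum>j<s. \<Sum>i<L j. real_of_int (nhat j i * M j i + rt j i))
              / real (\<Sum>j<s. L j)) - N\<bar>
       \<le> rnd ((\<Sum>j<s. real (L j) * tau j) / real (\<Sum>j<s. L j))"
proof -
  define d where "d = delta L M"
  have dpos: "0 < d j" if "j < s" for j
    unfolding d_def delta_def by (rule Lcm_pos) (use Mpos that in auto)
  have Mdvd: "M j i dvd d j" if "i < L j" for j i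
    unfolding d_def delta_def using that by (intro dvd_Lcm) auto
  define R where "R = (\<lambda>j. N mod d j)"
  have modR: "R j mod M j i = N mod M j i" if "i < L j" for j i
    unfolding R_def using Mdvd[OF that] by (simp add: mod_mod_cancel)
  define e where "e = (\<lambda>j i. rt j i - N mod M j i)"
  have e_bound: "\<bar>e j i\<bar> \<le> \<lfloor>tau j\<rfloor>" if "j < s" "i < L j" for j i
  proof -
    have "real_of_int \<bar>e j i\<bar> \<le> tau j" using rt_err that unfolding e_def by simp
    then show ?thesis by (simp add: le_floor_iff)
  qed
  have stage1_ok: "\<exists>Kj. stage1 L M rt kg j = Some Kj \<and> (\<forall>i<L j. Kj i = R j div M j i)"
    if j: "j < s" for j
  proof (cases "L j \<ge> 2")
    case True
    have ref: "is_ref_index (L j) (M j) (kg j)" using kg_ref j True by blast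
    then have kgl: "kg j < L j" unfolding is_ref_index_def by blast
    have gle: "\<forall>i<L j. i \<noteq> kg j \<longrightarrow> maxmin_gcd (L j) (M j) \<le> gcd (M j (kg j)) (M j i)"
    proof (intro allI impI)
      fix i assume "i < L j" "i \<noteq> kg j"
      then have "gcd (M j (kg j)) (M j i) \<in> (\<lambda>q. gcd (M j (kg j)) (M j q)) ` ({..<L j} - {kg j})" by auto
      then have "Min ((\<lambda>q. gcd (M j (kg j)) (M j q)) ` ({..<L j} - {kg j})) \<le> gcd (M j (kg j)) (M j i)"
        by (intro Min_le) auto
      then show "maxmin_gcd (L j) (M j) \<le> gcd (M j (kg j)) (M j i)"
        using ref unfolding is_ref_index_def by simp
    qed
    have XL: "R j < Lcm (M j ` {..<L j})" using dpos[OF j] unfolding R_def d_def delta_def by simp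
    have X0: "0 \<le> R j" using dpos[OF j] unfolding R_def by simp
    have err: "\<forall>i<L j. 4 * \<bar>rt j i - R j mod M j i\<bar> < maxmin_gcd (L j) (M j)"
    proof (intro allI impI)
      fix i assume i: "i < L j"
      have "real_of_int \<bar>rt j i - N mod M j i\<bar> \<le> tau j" using rt_err j i by simp
      moreover have "tau j < real_of_int (maxmin_gcd (L j) (M j)) / 4" using tau_bound[rule_format, OF j] True by simp
      ultimately have "real_of_int (4 * \<bar>rt j i - N mod M j i\<bar>) < real_of_int (maxmin_gcd (L j) (M j))"
        by simp
      then have "4 * \<bar>rt j i - N mod M j i\<bar> < maxmin_gcd (L j) (M j)" by (simp only: of_int_less_iff)
      then show "4 * \<bar>rt j i - R j mod M j i\<bar> < maxmin_gcd (L j) (M j)"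
        using modR[OF i] by simp
    qed
    obtain n where "alg_A (L j) (M j) (kg j) (rt j) = Some n" "\<forall>i<L j. n i = R j div M j i"
      using alg_A_correct[OF kgl _ gle X0 XL err] Mpos j by blast
    then show ?thesis using True unfolding stage1_def by auto
  next
    case False
    then have L1j: "L j = 1" using L1 j by (metis le_antisym not_less_eq_eq one_add_one plus_1_eq_Suc)
    have "{..<L j} = {0}" using L1j by auto
    moreover have "0 < M j 0" using Mpos j L1j by simp
    ultimately have "d j = M j 0" unfolding d_def delta_def using L1j by simp
    then have "R j div M j 0 = 0" unfolding R_def using Mpos j L1j by simp
    then show ?thesis using False L1j unfolding stage1_def by auto
  qed
  define K where "K = (\<lambda>j. the (stage1 L M rt kg j))"
  have Kprop: "stage1 L M rt kg j = Some (K j)" "\<forall>i<L j. K j i = R j div M j i" if "j < s" for j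
    using stage1_ok[OF that] unfolding K_def by auto
  define Nh where "Nh = (\<lambda>j. Nhat_group L M rt j (K j))"
  have Nh_bound: "\<bar>Nh j - R j\<bar> \<le> \<lfloor>tau j\<rfloor>" if j: "j < s" for j
  proof -
    define t where "t = \<lfloor>tau j\<rfloor>"
    have Lpos: "0 < real (L j)" using L1 j by auto
    have trm: "real_of_int (K j i * M j i + rt j i) = real_of_int (R j) + real_of_int (e j i)"
      if i: "i < L j" for i
    proof -
      have "K j i * M j i = R j - R j mod M j i" using Kprop(2)[OF j] i
        by (simp add: minus_mod_eq_div_mult)
      then show ?thesis using modR[OF i] unfolding e_def by simp
    qed
    have "(\<Sum>i<L j. real_of_int (K j i * M j i + rt j i)) = (\<Sum>i<L j. real_of_int (R j) + real_of_int (e j i))"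
      using trm by (intro sum.cong) auto
    also have "\<dots> = real (L j) * real_of_int (R j) + (\<Sum>i<L j. real_of_int (e j i))"
      by (simp add: sum.distrib)
    finally have S: "(\<Sum>i<L j. real_of_int (K j i * M j i + rt j i)) / real (L j)
       = real_of_int (R j) + (\<Sum>i<L j. real_of_int (e j i)) / real (L j)"
      using Lpos by (simp add: field_simps)
    define a where "a = (\<Sum>i<L j. real_of_int (e j i)) / real (L j)"
    have "(\<Sum>i<L j. real_of_int (e j i)) \<le> (\<Sum>i<L j. real_of_int t)"
    proof (intro sum_mono)
      fix i assume "i \<in> {..<L j}"
      then have "\<bar>e j i\<bar> \<le> t" using e_bound j unfolding t_def by simp
      then have "e j i \<le> t" "- t \<le> e j i" by (simp_all add: abs_le_iff)
      then show "real_of_int (e j i) \<le> real_of_int t" by simp_all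
    qed
    then have a1: "a \<le> real_of_int t" unfolding a_def using Lpos by (simp add: field_simps)
    have "(\<Sum>i<L j. - real_of_int t) \<le> (\<Sum>i<L j. real_of_int (e j i))"
    proof (intro sum_mono)
      fix i assume "i \<in> {..<L j}"
      then have "\<bar>e j i\<bar> \<le> t" using e_bound j unfolding t_def by simp
      then have "e j i \<le> t" "- t \<le> e j i" by (simp_all add: abs_le_iff)
      then show "- real_of_int t \<le> real_of_int (e j i)" by simp_all
    qed
    then have a2: "- real_of_int t \<le> a" unfolding a_def using Lpos by (simp add: field_simps)
    have "Nh j = R j + rnd a" unfolding Nh_def Nhat_group_def S a_def by (simp add: rnd_int_add)
    moreover have "rnd a \<le> t" using rnd_mono[OF a1] by simp
    moreover have "- t \<le> rnd a" using rnd_mono[OF a2] by (metis of_int_minus rnd_of_int)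
    ultimately show ?thesis unfolding t_def by simp
  qed
  have kl: "k0 < s" using k0_ref unfolding is_ref_index_def by blast
  have gle2: "\<forall>i<s. i \<noteq> k0 \<longrightarrow> maxmin_gcd s d \<le> gcd (d k0) (d i)"
  proof (intro allI impI)
    fix i assume "i < s" "i \<noteq> k0"
    then have "gcd (d k0) (d i) \<in> (\<lambda>q. gcd (d k0) (d q)) ` ({..<s} - {k0})" by auto
    then have "Min ((\<lambda>q. gcd (d k0) (d q)) ` ({..<s} - {k0})) \<le> gcd (d k0) (d i)"
      by (intro Min_le) auto
    then show "maxmin_gcd s d \<le> gcd (d k0) (d i)"
      using k0_ref unfolding is_ref_index_def d_def by simp
  qed
  have err2: "\<forall>j<s. 4 * \<bar>Nh j - N mod d j\<bar> < maxmin_gcd s d"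
  proof (intro allI impI)
    fix j assume j: "j < s"
    have "real_of_int \<lfloor>tau j\<rfloor> \<le> tau j" by simp
    moreover have "tau j < real_of_int (maxmin_gcd s d) / 4" using tau_bound[rule_format, OF j] unfolding d_def by simp
    ultimately have "4 * real_of_int \<lfloor>tau j\<rfloor> < real_of_int (maxmin_gcd s d)" by linarith
    then have "real_of_int (4 * \<lfloor>tau j\<rfloor>) < real_of_int (maxmin_gcd s d)" by simp
    then have "4 * \<lfloor>tau j\<rfloor> < maxmin_gcd s d" by (simp only: of_int_less_iff)
    then show "4 * \<bar>Nh j - N mod d j\<bar> < maxmin_gcd s d"
      using Nh_bound[OF j] unfolding R_def by (smt (verit))
  qed
  obtain l where l: "alg_A s d k0 Nh = Some l" "\<forall>j<s. l j = N div d j"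
    using alg_A_correct[OF kl _ gle2 N_range(1) _ err2] dpos N_range(2) unfolding d_def by blast
  define nhat where "nhat = (\<lambda>j i. l j * d j div M j i + K j i)"
  have TS: "two_stage s L M rt kg k0 = Some nhat"
  proof -
    have "\<forall>j<s. stage1 L M rt kg j \<noteq> None" using Kprop by auto
    then show ?thesis using l(1) unfolding two_stage_def nhat_def K_def[symmetric] d_def[symmetric]
      by (simp add: Nh_def)
  qed
  have nh: "nhat j i = N div M j i" if j: "j < s" and i: "i < L j" for j i
  proof -
    have Mp: "0 < M j i" using Mpos j i by auto
    obtain c where c: "d j = M j i * c" using Mdvd[OF i] by blast
    have nh1: "nhat j i = (N div d j) * c + R j div M j i"
      unfolding nhat_def using l(2) j Kprop(2)[OF j] i c Mp by simp
    have eq: "N = R j + ((N div d j) * c) * M j i" unfolding R_def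
      using div_mult_mod_eq[of N "d j"] c by (simp add: algebra_simps)
    have "N div M j i = (R j + ((N div d j) * c) * M j i) div M j i"
      using arg_cong[OF eq, of "\<lambda>x. x div M j i"] .
    also have "\<dots> = (N div d j) * c + R j div M j i"
      by (rule div_mult_self1) (use Mp in simp)
    finally show ?thesis using nh1 by simp
  qed
  define SL where "SL = (\<Sum>j<s. L j)"
  have SLpos: "0 < real SL"
  proof -
    have "L 0 \<le> SL" unfolding SL_def using s2 by (intro member_le_sum) auto
    moreover have "1 \<le> L 0" using L1 s2 by auto
    ultimately show ?thesis by simp
  qed
  have inner: "(\<Sum>i<L j. real_of_int (nhat j i * M j i + rt j i))
      = real (L j) * real_of_int N + (\<Sum>i<L j. real_of_int (e j i))" if j: "j < s" for j
  proof -
    have "(\<Sum>i<L j. real_of_int (nhat j i * M j i + rt j i)) = (\<Sum>i<L j. real_of_int N + real_of_int (e j i))"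
    proof (intro sum.cong refl)
      fix i assume "i \<in> {..<L j}"
      then have i: "i < L j" by simp
      have "nhat j i * M j i = N - N mod M j i" using nh[OF j i] by (simp add: minus_mod_eq_div_mult)
      then show "real_of_int (nhat j i * M j i + rt j i) = real_of_int N + real_of_int (e j i)"
        unfolding e_def by simp
    qed
    then show ?thesis by (simp add: sum.distrib)
  qed
  define E where "E = (\<Sum>j<s. \<Sum>i<L j. real_of_int (e j i))"
  have tot: "(\<Sum>j<s. \<Sum>i<L j. real_of_int (nhat j i * M j i + rt j i)) = real SL * real_of_int N + E"
  proof -
    have "(\<Sum>j<s. \<Sum>i<L j. real_of_int (nhat j i * M j i + rt j i))
        = (\<Sum>j<s. real (L j) * real_of_int N + (\<Sum>i<L j. real_of_int (e j i)))"
      using inner by (intro sum.cong) auto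
    also have "\<dots> = (\<Sum>j<s. real (L j)) * real_of_int N + E"
      unfolding E_def by (simp add: sum.distrib sum_distrib_right)
    finally show ?thesis unfolding SL_def by simp
  qed
  have Eb: "\<bar>E\<bar> \<le> (\<Sum>j<s. real (L j) * tau j)"
  proof -
    have "\<bar>E\<bar> \<le> (\<Sum>j<s. \<bar>\<Sum>i<L j. real_of_int (e j i)\<bar>)" unfolding E_def by (rule sum_abs)
    also have "\<dots> \<le> (\<Sum>j<s. real (L j) * tau j)"
    proof (intro sum_mono)
      fix j assume "j \<in> {..<s}"
      then have j: "j < s" by simp
      have "\<bar>\<Sum>i<L j. real_of_int (e j i)\<bar> \<le> (\<Sum>i<L j. \<bar>real_of_int (e j i)\<bar>)" by (rule sum_abs)
      also have "\<dots> \<le> (\<Sum>i<L j. tau j)"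
        using rt_err j unfolding e_def by (intro sum_mono) auto
      finally show "\<bar>\<Sum>i<L j. real_of_int (e j i)\<bar> \<le> real (L j) * tau j" by simp
    qed
    finally show ?thesis .
  qed
  have nh2: "\<forall>j<s. \<forall>i<L j. nhat j i = (N - N mod M j i) div M j i"
  proof (intro allI impI)
    fix j i assume j: "j < s" and i: "i < L j"
    have Mp: "0 < M j i" using Mpos j i by auto
    have "(N - N mod M j i) div M j i = (M j i * (N div M j i)) div M j i"
      by (simp only: minus_mod_eq_mult_div)
    also have "\<dots> = N div M j i" using Mp by simp
    finally show "nhat j i = (N - N mod M j i) div M j i" using nh[OF j i] by simp
  qed
  have fin2: "\<bar>rnd ((\<Sum>j<s. \<Sum>i<L j. real_of_int (nhat j i * M j i + rt j i))
              / real (\<Sum>j<s. L j)) - N\<bar>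
       \<le> rnd ((\<Sum>j<s. real (L j) * tau j) / real (\<Sum>j<s. L j))"
    using final_est[OF SLpos tot Eb] unfolding SL_def .
  show ?thesis using TS nh2 fin2 by blast
qed

end
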